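(* Let $d, r$ be positive integers with $r \geq 2$ and such that $m := r \log r$ is a positive integer, and let $B > 0$, $\epsilon > 0$, $0 < \delta < 1$. Let $\eta$ be an $m \times (d+1)$ random matrix whose rows $\eta_1, \ldots, \eta_m$ are independent, each with independent coordinates distributed as $\mathcal{N}\!\left(0, \frac{8B^2 \ln(1.25/\delta)}{\epsilon^2}\right)$. Fix $\beta \in \mathbb{R}^d$ and let $\beta_{-1} = \begin{bmatrix} \beta \\ -1 \end{bmatrix} \in \mathbb{R}^{d+1}$. Then there is an absolute constant $c > 0$ (independent of $d, r, B, \epsilon, \delta, \beta$) such that, with probability at least $c$, $$\|\eta \beta_{-1}\|_1 \leq \frac{2B\, r \log r \sqrt{2 \ln(1.25/\delta)}}{\epsilon}\, \|\beta_{-1}\|_1 .$$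
   Context: This bound is used in the paper for the regularization term arising when a sketch $S\hat{A}$ of the noise-augmented matrix $\hat{A} = \begin{bmatrix} A \\ \eta \end{bmatrix}$ is released for private $\ell_1$ regression, where $A \in \mathbb{R}^{n \times (d+1)}$ is a data matrix with rows of $\ell_2$ norm at most $B$ and $S \in \{0,1\}^{r \times (n + r\log r)}$ has a single $1$ in each column. "With constant probability" in the paper is interpreted as "with probability at least some absolute positive constant". *)

theory Defs
  imports "HOL-Probability.Probability"
begin

text \<open>Distribution of the m x (d+1) noise matrix eta: all entries independent,
  each Gaussian N(0, sigma^2) with standard deviation sigma.\<close>
definition noise_matrix_dist :: "nat \<Rightarrow> nat \<Rightarrow> real \<Rightarrow> (nat \<times> nat \<Rightarrow> real) measure" where
  "noise_matrix_dist m d \<sigma> =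
     PiM ({..<m} \<times> {..<Suc d}) (\<lambda>_. density lborel (normal_density 0 \<sigma>))"

definition beta_ext :: "nat \<Rightarrow> (nat \<Rightarrow> real) \<Rightarrow> nat \<Rightarrow> real" where
  "beta_ext d \<beta> j = (if j < d then \<beta> j else -1)"

definition l1_mat_vec :: "nat \<Rightarrow> nat \<Rightarrow> (nat \<times> nat \<Rightarrow> real) \<Rightarrow> (nat \<Rightarrow> real) \<Rightarrow> real" where
  "l1_mat_vec m d \<eta> v = (\<Sum>i<m. \<bar>\<Sum>j<Suc d. \<eta> (i, j) * v j\<bar>)"

end

theory Submission
  imports Defs
begin

lemma comp_abs_integral:
  fixes I :: "'i set" and \<sigma> :: real
  assumes sp: "0 < \<sigma>" and x: "x \<in> I"
  shows "has_bochner_integral (PiM I (\<lambda>_. density lborel (normal_density 0 \<sigma>)))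
           (\<lambda>\<eta>. \<bar>\<eta> x\<bar>) (\<sigma> * sqrt (2 / pi))"
proof -
  let ?N = "density lborel (normal_density 0 \<sigma>)"
  let ?M = "PiM I (\<lambda>_. ?N)"
  have ps: "prob_space ?N" using prob_space_normal_density[OF sp] .
  have "has_bochner_integral lborel (\<lambda>x. normal_density 0 \<sigma> x * \<bar>x - 0\<bar>^(2 * 0 + 1))
          (2^0 * \<sigma>^(2 * 0 + 1) * fact 0 * sqrt (2 / pi))"
    by (rule normal_moment_abs_odd[OF sp])
  then have h1: "has_bochner_integral lborel (\<lambda>x. normal_density 0 \<sigma> x *\<^sub>R \<bar>x\<bar>) (\<sigma> * sqrt (2 / pi))"
    by simp
  have hN: "has_bochner_integral ?N abs (\<sigma> * sqrt (2 / pi))"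
    by (rule has_bochner_integral_density) (use h1 in auto)
  have D: "distr ?M ?N (\<lambda>\<omega>. \<omega> x) = ?N"
    by (rule distr_PiM_component) (use ps x in auto)
  have meas: "(\<lambda>\<omega>. \<omega> x) \<in> measurable ?M ?N"
    using x by (rule measurable_component_singleton)
  have "integrable (distr ?M ?N (\<lambda>\<omega>. \<omega> x)) abs"
    using hN D by (simp add: has_bochner_integral_iff)
  then have i: "integrable ?M (\<lambda>\<eta>. \<bar>\<eta> x\<bar>)"
    using integrable_distr_eq[OF meas, of abs] by simp
  have "integral\<^sup>L (distr ?M ?N (\<lambda>\<omega>. \<omega> x)) abs = integral\<^sup>L ?M (\<lambda>\<eta>. \<bar>\<eta> x\<bar>)"
    by (rule integral_distr[OF meas]) simp
  then have "integral\<^sup>L ?M (\<lambda>\<eta>. \<bar>\<eta> x\<bar>) = \<sigma> * sqrt (2 / pi)"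
    using hN D by (simp add: has_bochner_integral_iff)
  with i show ?thesis by (simp add: has_bochner_integral_iff)
qed

theorem lemma2:
  shows "\<exists>c::real. c > 0 \<and>
    (\<forall>(d::nat) (r::nat) (m::nat) (B::real) (\<epsilon>::real) (\<delta>::real) (\<beta>::nat \<Rightarrow> real).
       d \<ge> 1 \<longrightarrow> r \<ge> 2 \<longrightarrow> m \<ge> 1 \<longrightarrow> real m = real r * log 2 (real r) \<longrightarrow>
       B > 0 \<longrightarrow> \<epsilon> > 0 \<longrightarrow> 0 < \<delta> \<longrightarrow> \<delta> < 1 \<longrightarrow>
       (let \<sigma> = sqrt (8 * B\<^sup>2 * ln ((5/4) / \<delta>) / \<epsilon>\<^sup>2);
            M = noise_matrix_dist m d \<sigma>
        in measure M {\<eta> \<in> space M.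
              l1_mat_vec m d \<eta> (beta_ext d \<beta>)
                \<le> 2 * B * (real r * log 2 (real r)) * sqrt (2 * ln ((5/4) / \<delta>)) / \<epsilon>
                    * (\<Sum>j<Suc d. \<bar>beta_ext d \<beta> j\<bar>)} \<ge> c))"
proof (intro exI[of _ "1 - sqrt (2 / pi)"] conjI allI impI)
  have "2 / pi < 1" using pi_gt3 by simp
  then show "0 < 1 - sqrt (2 / pi)" by simp
next
  fix d r m :: nat and B \<epsilon> \<delta> :: real and \<beta> :: "nat \<Rightarrow> real"
  assume d: "d \<ge> 1" and r: "r \<ge> 2" and m: "m \<ge> 1" and mr: "real m = real r * log 2 (real r)"
    and B: "B > 0" and e: "\<epsilon> > 0" and d0: "0 < \<delta>" and d1: "\<delta> < 1"
  define L where "L = ln ((5/4) / \<delta>)"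
  have L: "L > 0" unfolding L_def using d0 d1 by (simp add: field_simps)
  define \<sigma> where "\<sigma> = sqrt (8 * B\<^sup>2 * L / \<epsilon>\<^sup>2)"
  have \<sigma>eq: "\<sigma> = 2 * B * sqrt (2 * L) / \<epsilon>"
    unfolding \<sigma>_def
  proof (rule real_sqrt_unique)
    show "(2 * B * sqrt (2 * L) / \<epsilon>)\<^sup>2 = 8 * B\<^sup>2 * L / \<epsilon>\<^sup>2"
      using L by (simp add: power2_eq_square power_mult_distrib field_simps)
    show "0 \<le> 2 * B * sqrt (2 * L) / \<epsilon>" using B e L by simp
  qed
  have sp: "\<sigma> > 0" using \<sigma>eq B e L by simp
  define v where "v = beta_ext d \<beta>"
  define S where "S = (\<Sum>j<Suc d. \<bar>v j\<bar>)"
  have S: "S \<ge> 1"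
  proof -
    have "S \<ge> \<bar>v d\<bar>" unfolding S_def by (rule member_le_sum) auto
    moreover have "v d = -1" unfolding v_def beta_ext_def by simp
    ultimately show ?thesis by simp
  qed
  define I where "I = {..<m} \<times> {..<Suc d}"
  define M where "M = noise_matrix_dist m d \<sigma>"
  have M: "M = PiM I (\<lambda>_. density lborel (normal_density 0 \<sigma>))"
    unfolding M_def noise_matrix_dist_def I_def ..
  interpret P: prob_space M
    unfolding M by (intro prob_space_PiM prob_space_normal_density sp)
  define T where "T = real m * \<sigma> * S"
  have T: "T > 0" unfolding T_def using m sp S by simp
  define Y where "Y = (\<lambda>\<eta>. \<Sum>i<m. \<Sum>j<Suc d. \<bar>v j\<bar> * \<bar>\<eta> (i, j)\<bar>)"
  have HY: "has_bochner_integral M Y (\<Sum>i<m. \<Sum>j<Suc d. \<bar>v j\<bar> * (\<sigma> * sqrt (2 / pi)))"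
    unfolding Y_def
  proof (intro has_bochner_integral_sum has_bochner_integral_mult_right)
    fix i j assume "i \<in> {..<m}" "j \<in> {..<Suc d}"
    then have "(i, j) \<in> I" unfolding I_def by auto
    then show "has_bochner_integral M (\<lambda>\<eta>. \<bar>\<eta> (i, j)\<bar>) (\<sigma> * sqrt (2 / pi))"
      unfolding M by (rule comp_abs_integral[OF sp])
  qed
  have EY: "(\<Sum>i<m. \<Sum>j<Suc d. \<bar>v j\<bar> * (\<sigma> * sqrt (2 / pi))) = T * sqrt (2 / pi)"
  proof -
    have "(\<Sum>j<Suc d. \<bar>v j\<bar> * (\<sigma> * sqrt (2 / pi))) = S * (\<sigma> * sqrt (2 / pi))"
      unfolding S_def by (rule sum_distrib_right[symmetric])
    then show ?thesis unfolding T_def by simp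
  qed
  have Ymeas: "Y \<in> borel_measurable M"
    using HY by (auto simp: has_bochner_integral_iff)
  have Ynn: "0 \<le> Y \<eta>" for \<eta> unfolding Y_def by (intro sum_nonneg) auto
  have mk: "P.prob {\<eta> \<in> space M. Y \<eta> \<ge> T} \<le> integral\<^sup>L M Y / T"
    by (rule integral_Markov_inequality_measure[where A="space M"])
       (use HY T Ynn in \<open>auto simp: has_bochner_integral_iff intro!: AE_I2\<close>)
  also have "\<dots> = sqrt (2 / pi)"
    using HY EY T by (simp add: has_bochner_integral_iff)
  finally have mk2: "P.prob {\<eta> \<in> space M. Y \<eta> \<ge> T} \<le> sqrt (2 / pi)" .
  have set1: "{\<eta> \<in> space M. Y \<eta> \<ge> T} \<in> P.events"
    using Ymeas by measurable
  have compl: "{\<eta> \<in> space M. \<not> Y \<eta> \<ge> T} = space M - {\<eta> \<in> space M. Y \<eta> \<ge> T}" by auto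
  have "P.prob {\<eta> \<in> space M. \<not> Y \<eta> \<ge> T} = 1 - P.prob {\<eta> \<in> space M. Y \<eta> \<ge> T}"
    unfolding compl by (rule P.prob_compl[OF set1])
  with mk2 have low: "P.prob {\<eta> \<in> space M. \<not> Y \<eta> \<ge> T} \<ge> 1 - sqrt (2 / pi)" by simp
  have le: "l1_mat_vec m d \<eta> v \<le> Y \<eta>" for \<eta>
    unfolding l1_mat_vec_def Y_def
  proof (rule sum_mono)
    fix i assume "i \<in> {..<m}"
    have "\<bar>\<Sum>j<Suc d. \<eta> (i, j) * v j\<bar> \<le> (\<Sum>j<Suc d. \<bar>\<eta> (i, j) * v j\<bar>)"
      by (rule sum_abs)
    also have "\<dots> = (\<Sum>j<Suc d. \<bar>v j\<bar> * \<bar>\<eta> (i, j)\<bar>)"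
      by (simp add: abs_mult mult.commute)
    finally show "\<bar>\<Sum>j<Suc d. \<eta> (i, j) * v j\<bar> \<le> (\<Sum>j<Suc d. \<bar>v j\<bar> * \<bar>\<eta> (i, j)\<bar>)" .
  qed
  have l1meas: "(\<lambda>\<eta>. l1_mat_vec m d \<eta> v) \<in> borel_measurable M"
    unfolding l1_mat_vec_def
  proof (intro borel_measurable_sum borel_measurable_abs borel_measurable_times borel_measurable_const)
    fix i j assume "i \<in> {..<m}" "j \<in> {..<Suc d}"
    then have "(i, j) \<in> I" unfolding I_def by auto
    then have "(\<lambda>\<eta>. \<eta> (i, j)) \<in> measurable M (density lborel (normal_density 0 \<sigma>))"
      unfolding M by (rule measurable_component_singleton)
    then show "(\<lambda>\<eta>. \<eta> (i, j)) \<in> borel_measurable M"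
      by (simp add: measurable_cong_sets[OF refl sets_density])
  qed
  have set2: "{\<eta> \<in> space M. l1_mat_vec m d \<eta> v \<le> T} \<in> P.events"
    using l1meas by measurable
  have "P.prob {\<eta> \<in> space M. \<not> Y \<eta> \<ge> T} \<le> P.prob {\<eta> \<in> space M. l1_mat_vec m d \<eta> v \<le> T}"
    by (rule P.finite_measure_mono[OF _ set2]) (use le in \<open>fastforce intro: order_trans[OF le] less_imp_le simp: not_le\<close>)
  with low have fin: "P.prob {\<eta> \<in> space M. l1_mat_vec m d \<eta> v \<le> T} \<ge> 1 - sqrt (2 / pi)" by simp
  have Teq: "2 * B * (real r * log 2 (real r)) * sqrt (2 * ln ((5/4) / \<delta>)) / \<epsilon>
                    * (\<Sum>j<Suc d. \<bar>beta_ext d \<beta> j\<bar>) = T"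
    unfolding T_def \<sigma>eq S_def v_def L_def mr by simp
  show "let \<sigma> = sqrt (8 * B\<^sup>2 * ln ((5/4) / \<delta>) / \<epsilon>\<^sup>2);
            M = noise_matrix_dist m d \<sigma>
        in measure M {\<eta> \<in> space M.
              l1_mat_vec m d \<eta> (beta_ext d \<beta>)
                \<le> 2 * B * (real r * log 2 (real r)) * sqrt (2 * ln ((5/4) / \<delta>)) / \<epsilon>
                    * (\<Sum>j<Suc d. \<bar>beta_ext d \<beta> j\<bar>)} \<ge> 1 - sqrt (2 / pi)"
    unfolding Let_def Teq using fin unfolding M_def \<sigma>_def L_def v_def .
qed

end
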